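(* Let $G$ be a minimal prime graph complement, and suppose $G$ has a vertex of degree $2$. Then $G$ contains an induced $5$-cycle $S$, and there are three vertices of $S$, exactly two of which are adjacent to each other, such that $G$ is obtained from $S$ by duplicating each of these three vertices some finite (possibly zero) number of times, where duplicating a vertex $v$ means adding a new vertex $w$ adjacent to exactly the neighbors of $v$ (and not to $v$). Equivalently, $G$ is isomorphic to the graph with vertex set $\{A,B\}\cup P\cup Q\cup R$ (disjoint union) with $|P|,|Q|,|R|\ge 1$, in which $A$ is adjacent to every vertex of $P\cup R$, $B$ is adjacent to every vertex of $Q\cup R$, every vertex of $P$ is adjacent to every vertex of $Q$, and there are no other edges. In particular, $G$ is the complement of a reseminant graph.
   Context: All graphs are finite and simple. A graph $G$ is a minimal prime graph complement if $G$ has at least $2$ vertices and: (1) the complement $\overline{G}$ is connected; (2) $G$ is triangle-free; (3) $G$ is $3$-colorable (has a proper vertex coloring with $3$ colors); (4) $G$ is edge-maximal with respect to (2) and (3), i.e. for any two distinct nonadjacent vertices $u,v$ of $G$, the graph obtained by adding the edge $uv$ to $G$ either contains a triangle or is not $3$-colorable. (Its complement is called a minimal prime graph.) A minimal prime graph is reseminant if it is obtained from the $5$-cycle $C_5$ by repeated vertex duplication; in terms of complements, $G$ is the complement of a reseminant graph iff $G$ is obtained from $C_5$ by repeatedly choosing a vertex $v$ and adding a new vertex $w$ adjacent to exactly the neighbors of $v$. *)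

theory Defs
  imports Main
begin

definition simple_graph :: "'a set \<Rightarrow> ('a \<Rightarrow> 'a \<Rightarrow> bool) \<Rightarrow> bool" where
  "simple_graph V E \<longleftrightarrow> finite V \<and> (\<forall>x y. E x y \<longrightarrow> x \<in> V \<and> y \<in> V)
     \<and> (\<forall>x y. E x y \<longrightarrow> E y x) \<and> (\<forall>x. \<not> E x x)"

definition complement_rel :: "'a set \<Rightarrow> ('a \<Rightarrow> 'a \<Rightarrow> bool) \<Rightarrow> 'a \<Rightarrow> 'a \<Rightarrow> bool" where
  "complement_rel V E x y \<longleftrightarrow> x \<in> V \<and> y \<in> V \<and> x \<noteq> y \<and> \<not> E x y"

definition graph_connected :: "'a set \<Rightarrow> ('a \<Rightarrow> 'a \<Rightarrow> bool) \<Rightarrow> bool" where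
  "graph_connected V E \<longleftrightarrow> (\<forall>u\<in>V. \<forall>v\<in>V. E\<^sup>*\<^sup>* u v)"

definition triangle_free :: "('a \<Rightarrow> 'a \<Rightarrow> bool) \<Rightarrow> bool" where
  "triangle_free E \<longleftrightarrow> \<not> (\<exists>a b c. E a b \<and> E b c \<and> E a c)"

definition colorable :: "'a set \<Rightarrow> ('a \<Rightarrow> 'a \<Rightarrow> bool) \<Rightarrow> nat \<Rightarrow> bool" where
  "colorable V E k \<longleftrightarrow> (\<exists>c :: 'a \<Rightarrow> nat. (\<forall>v\<in>V. c v < k) \<and> (\<forall>u v. E u v \<longrightarrow> c u \<noteq> c v))"

definition add_edge :: "('a \<Rightarrow> 'a \<Rightarrow> bool) \<Rightarrow> 'a \<Rightarrow> 'a \<Rightarrow> 'a \<Rightarrow> 'a \<Rightarrow> bool" where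
  "add_edge E u v = (\<lambda>x y. E x y \<or> (x = u \<and> y = v) \<or> (x = v \<and> y = u))"

definition minimal_prime_graph_complement :: "'a set \<Rightarrow> ('a \<Rightarrow> 'a \<Rightarrow> bool) \<Rightarrow> bool" where
  "minimal_prime_graph_complement V E \<longleftrightarrow>
     simple_graph V E \<and> 2 \<le> card V \<and>
     graph_connected V (complement_rel V E) \<and>
     triangle_free E \<and> colorable V E 3 \<and>
     (\<forall>u\<in>V. \<forall>v\<in>V. u \<noteq> v \<and> \<not> E u v \<longrightarrow>
        \<not> (triangle_free (add_edge E u v) \<and> colorable V (add_edge E u v) 3))"

definition degree :: "'a set \<Rightarrow> ('a \<Rightarrow> 'a \<Rightarrow> bool) \<Rightarrow> 'a \<Rightarrow> nat" where
  "degree V E v = card {u \<in> V. E v u}"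

end

theory Submission
  imports Defs
begin

lemma mpgc_facts:
  assumes "minimal_prime_graph_complement V E"
  shows "finite V" "\<And>x y. E x y \<Longrightarrow> x \<in> V" "\<And>x y. E x y \<Longrightarrow> y \<in> V"
    "\<And>x y. E x y \<Longrightarrow> E y x" "\<And>x. \<not> E x x"
    "\<And>x y z. E x y \<Longrightarrow> E y z \<Longrightarrow> \<not> E x z"
    "graph_connected V (complement_rel V E)" "colorable V E 3"
  using assms unfolding minimal_prime_graph_complement_def simple_graph_def triangle_free_def
  by blast+

lemma sat:
  assumes m: "minimal_prime_graph_complement V E"
    and "u \<in> V" "w \<in> V" "u \<noteq> w" "\<not> E u w" "\<not> (\<exists>z. E u z \<and> E w z)"
    "\<forall>y\<in>V. c y < (3::nat)" "\<forall>x y. E x y \<longrightarrow> c x \<noteq> c y" "c u \<noteq> c w"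
  shows False
proof -
  note f = mpgc_facts[OF m]
  have tf: "triangle_free (add_edge E u w)"
    unfolding triangle_free_def add_edge_def
    using assms(4,6) f(4,5,6) by blast
  have col: "colorable V (add_edge E u w) 3"
    unfolding colorable_def add_edge_def
    using assms(7,8,9) by (intro exI[of _ c]) auto
  have "\<not> (triangle_free (add_edge E u w) \<and> colorable V (add_edge E u w) 3)"
    using m assms(2-5) unfolding minimal_prime_graph_complement_def by blast
  with tf col show False by blast
qed

lemma Pne:
  assumes m: "minimal_prime_graph_complement V E"
    and v: "v \<in> V" and ab: "a \<noteq> b" and nbr: "\<forall>y. E v y \<longleftrightarrow> (y = a \<or> y = b)"
    and cover: "\<forall>y\<in>V. y = a \<or> y = b \<or> E a y \<or> E b y"
  shows "\<exists>p. E a p \<and> \<not> E b p"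
proof (rule ccontr)
  note f = mpgc_facts[OF m]
  assume "\<not> (\<exists>p. E a p \<and> \<not> E b p)"
  hence AB: "\<And>p. E a p \<Longrightarrow> E b p" by blast
  have nab: "\<not> E a b" using nbr f(6)[of v a b] by blast
  show False
  proof (cases "\<exists>q. E b q \<and> \<not> E a q")
    case True
    then obtain q where q: "E b q" "\<not> E a q" by blast
    define c :: "_ \<Rightarrow> nat" where "c y = (if y = a then 0 else if y = b then 1 else 2)" for y
    show False
    proof (rule sat[OF m, of a q c])
      show "a \<in> V" using nbr f(3) by blast
      show "q \<in> V" using q f(3) by blast
      show "a \<noteq> q" using q nab f(4)[of b a] by blast
      show "\<not> E a q" by fact
      show "\<not> (\<exists>z. E a z \<and> E q z)" using AB q f(6)[of b q] by blast
      show "\<forall>y\<in>V. c y < 3" by (simp add: c_def)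
      show "c a \<noteq> c q" using q f(5) \<open>a \<noteq> q\<close> by (auto simp: c_def)
      show "\<forall>x y. E x y \<longrightarrow> c x \<noteq> c y"
      proof (intro allI impI)
        fix x y assume e: "E x y"
        have "x \<in> V" "y \<in> V" using e f(2,3) by auto
        show "c x \<noteq> c y"
        proof (cases "x = a \<or> x = b \<or> y = a \<or> y = b")
          case True then show ?thesis using e nab f(4)[of x y] f(5) ab by (auto simp: c_def)
        next
          case False
          then have "E b x" "E b y" using cover AB \<open>x \<in> V\<close> \<open>y \<in> V\<close> by blast+
          then show ?thesis using e f(4)[of b x] f(6)[of x b y] by blast
        qed
      qed
    qed
  next
    case False
    hence BA: "\<And>p. E b p \<Longrightarrow> E a p" by blast
    have "(complement_rel V E)\<^sup>*\<^sup>* a v"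
      using f(7) v nbr f(3) unfolding graph_connected_def by blast
    hence "v \<in> {a, b}"
    proof (induction rule: rtranclp_induct)
      case base then show ?case by simp
    next
      case (step y z)
      have z: "z \<in> V" "z \<noteq> y" "\<not> E y z" using step.hyps(2) unfolding complement_rel_def by auto
      have "z = a \<or> z = b \<or> E a z \<or> E b z" using cover z(1) by blast
      then show ?case using step.IH z AB[of z] BA[of z] by blast
    qed
    then show False using nbr f(5) by blast
  qed
qed

lemma core:
  assumes m: "minimal_prime_graph_complement V E"
    and v: "v \<in> V" and ab: "a \<noteq> b" and nbr: "\<forall>y. E v y \<longleftrightarrow> (y = a \<or> y = b)"
  shows "\<exists>A B P Q R.
           V = {A, B} \<union> P \<union> Q \<union> R \<and> A \<noteq> B \<and>
           A \<notin> P \<union> Q \<union> R \<and> B \<notin> P \<union> Q \<union> R \<and>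
           P \<inter> Q = {} \<and> P \<inter> R = {} \<and> Q \<inter> R = {} \<and>
           P \<noteq> {} \<and> Q \<noteq> {} \<and> R \<noteq> {} \<and>
           (\<forall>x y. E x y \<longleftrightarrow>
              (x = A \<and> y \<in> P \<union> R) \<or> (y = A \<and> x \<in> P \<union> R) \<or>
              (x = B \<and> y \<in> Q \<union> R) \<or> (y = B \<and> x \<in> Q \<union> R) \<or>
              (x \<in> P \<and> y \<in> Q) \<or> (x \<in> Q \<and> y \<in> P))"
proof -
  note f = mpgc_facts[OF m]
  have nab: "\<not> E a b" using nbr f(6)[of v a b] by blast
  have Ea: "E a v" "E b v" using nbr f(4)[of v a] f(4)[of v b] by auto
  have tfA: "\<not> E y z" if "E a y" "E a z" for y z using that f(4)[of a y] f(6)[of y a z] by blast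
  have tfB: "\<not> E y z" if "E b y" "E b z" for y z using that f(4)[of b y] f(6)[of y b z] by blast
  obtain c0 where c0: "\<forall>y\<in>V. c0 y < (3::nat)" "\<forall>x y. E x y \<longrightarrow> c0 x \<noteq> c0 y"
    using f(8) unfolding colorable_def by blast
  have forced: "c0 y = c0 v" if y: "y \<in> V" "y \<noteq> a" "y \<noteq> b" "\<not> E a y" "\<not> E b y" for y
  proof (rule ccontr)
    assume ne: "c0 y \<noteq> c0 v"
    show False
    proof (rule sat[OF m, of v y c0])
      show "v \<in> V" "y \<in> V" by fact+
      show "v \<noteq> y" using y Ea by blast
      show "\<not> E v y" using nbr y by blast
      show "\<not> (\<exists>z. E v z \<and> E y z)"
      proof
        assume "\<exists>z. E v z \<and> E y z"
        then obtain z where z: "E v z" "E y z" by blast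
        have "z = a \<or> z = b" using nbr z(1) by blast
        then show False using f(4)[OF z(2)] y by auto
      qed
      show "c0 v \<noteq> c0 y" using ne by simp
    qed (use c0 in auto)
  qed
  have cover: "\<forall>y\<in>V. y = a \<or> y = b \<or> E a y \<or> E b y"
  proof (rule ccontr)
    assume "\<not> ?thesis"
    then obtain x where x: "x \<in> V" "x \<noteq> a" "x \<noteq> b" "\<not> E a x" "\<not> E b x" by blast
    have Wind: "\<not> E y z" if "y \<in> V" "y \<noteq> a" "y \<noteq> b" "\<not> E a y" "\<not> E b y"
       "z \<in> V" "z \<noteq> a" "z \<noteq> b" "\<not> E a z" "\<not> E b z" for y z
      using forced[OF that(1-5)] forced[OF that(6-10)] c0(2) by metis
    define c :: "_ \<Rightarrow> nat" where "c y = (if y = a then 0 else if y = b then 1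
       else if E a y \<and> \<not> E b y then 1 else if E b y then 2 else 0)" for y
    show False
    proof (rule sat[OF m, of v x c])
      show "v \<in> V" "x \<in> V" by fact+
      show "v \<noteq> x" using x Ea by blast
      show "\<not> E v x" using nbr x by blast
      show "\<not> (\<exists>z. E v z \<and> E x z)"
      proof
        assume "\<exists>z. E v z \<and> E x z"
        then obtain z where z: "E v z" "E x z" by blast
        have "z = a \<or> z = b" using nbr z(1) by blast
        then show False using f(4)[OF z(2)] x by auto
      qed
      show "c v \<noteq> c x" using Ea x f(5) by (auto simp: c_def)
      show "\<forall>y\<in>V. c y < 3" by (simp add: c_def)
      show "\<forall>y z. E y z \<longrightarrow> c y \<noteq> c z"
      proof (intro allI impI)
        fix y z assume e: "E y z"
        have "y \<in> V" "z \<in> V" using e f(2,3) by auto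
        then show "c y \<noteq> c z" using e Wind[of y z] tfA[of y z] tfB[of y z] nab f(4)[of y z] f(5) ab
          by (auto simp: c_def)
      qed
    qed
  qed
  have PQ: "E p q" if p: "E a p" "\<not> E b p" and q: "E b q" "\<not> E a q" for p q
  proof (rule ccontr)
    assume npq: "\<not> E p q"
    define c :: "_ \<Rightarrow> nat" where "c y = (if y = a \<or> y = b then 0 else if E a y then 1 else 2)" for y
    show False
    proof (rule sat[OF m, of p q c])
      show "p \<in> V" "q \<in> V" using p q f(3) by auto
      show "p \<noteq> q" using p q by blast
      show "\<not> E p q" by fact
      show "\<not> (\<exists>z. E p z \<and> E q z)"
      proof
        assume "\<exists>z. E p z \<and> E q z"
        then obtain z where z: "E p z" "E q z" by blast
        have "z \<in> V" using z f(3) by blast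
        then have "z = a \<or> z = b \<or> E a z \<or> E b z" using cover by blast
        then show False using z p q tfA[of p z] tfB[of q z] f(4)[of q a] f(4)[of p b] by auto
      qed
      show "c p \<noteq> c q" using p q f(5)[of a] f(5)[of b] nab ab f(4)[of b a] by (auto simp: c_def)
      show "\<forall>y\<in>V. c y < 3" by (simp add: c_def)
      show "\<forall>y z. E y z \<longrightarrow> c y \<noteq> c z"
      proof (intro allI impI)
        fix y z assume e: "E y z"
        have "y \<in> V" "z \<in> V" using e f(2,3) by auto
        then show "c y \<noteq> c z" using e cover tfA[of y z] tfB[of y z] nab f(4)[of y z] f(5) ab
          by (auto simp: c_def)
      qed
    qed
  qed
  have Pn: "\<exists>p. E a p \<and> \<not> E b p" by (rule Pne[OF m v ab nbr cover])
  have Qn: "\<exists>p. E b p \<and> \<not> E a p"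
    by (rule Pne[OF m v ab[symmetric]]) (use nbr cover in blast)+
  show ?thesis
  proof (intro exI conjI)
    show "V = {a, b} \<union> {y. E a y \<and> \<not> E b y} \<union> {y. E b y \<and> \<not> E a y} \<union> {y. E a y \<and> E b y}"
    proof
      show "V \<subseteq> {a, b} \<union> {y. E a y \<and> \<not> E b y} \<union> {y. E b y \<and> \<not> E a y} \<union> {y. E a y \<and> E b y}"
        using cover by blast
      show "{a, b} \<union> {y. E a y \<and> \<not> E b y} \<union> {y. E b y \<and> \<not> E a y} \<union> {y. E a y \<and> E b y} \<subseteq> V"
        using nbr f(3)[of v a] f(3)[of v b] f(3)[of a] f(3)[of b] by blast
    qed
    show "\<forall>x y. E x y \<longleftrightarrow>
              (x = a \<and> y \<in> {y. E a y \<and> \<not> E b y} \<union> {y. E a y \<and> E b y}) \<or>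
              (y = a \<and> x \<in> {y. E a y \<and> \<not> E b y} \<union> {y. E a y \<and> E b y}) \<or>
              (x = b \<and> y \<in> {y. E b y \<and> \<not> E a y} \<union> {y. E a y \<and> E b y}) \<or>
              (y = b \<and> x \<in> {y. E b y \<and> \<not> E a y} \<union> {y. E a y \<and> E b y}) \<or>
              (x \<in> {y. E a y \<and> \<not> E b y} \<and> y \<in> {y. E b y \<and> \<not> E a y}) \<or>
              (x \<in> {y. E b y \<and> \<not> E a y} \<and> y \<in> {y. E a y \<and> \<not> E b y})"
    proof (intro allI iffI)
      fix x y assume e: "E x y"
      have "x \<in> V" "y \<in> V" using e f(2,3) by auto
      then have cx: "x = a \<or> x = b \<or> E a x \<or> E b x" and cy: "y = a \<or> y = b \<or> E a y \<or> E b y"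
        using cover by blast+
      then show "(x = a \<and> y \<in> {y. E a y \<and> \<not> E b y} \<union> {y. E a y \<and> E b y}) \<or>
              (y = a \<and> x \<in> {y. E a y \<and> \<not> E b y} \<union> {y. E a y \<and> E b y}) \<or>
              (x = b \<and> y \<in> {y. E b y \<and> \<not> E a y} \<union> {y. E a y \<and> E b y}) \<or>
              (y = b \<and> x \<in> {y. E b y \<and> \<not> E a y} \<union> {y. E a y \<and> E b y}) \<or>
              (x \<in> {y. E a y \<and> \<not> E b y} \<and> y \<in> {y. E b y \<and> \<not> E a y}) \<or>
              (x \<in> {y. E b y \<and> \<not> E a y} \<and> y \<in> {y. E a y \<and> \<not> E b y})"
        using e tfA[of x y] tfB[of x y] f(4)[of x y] f(5)[of x] f(4)[of b a] nab by auto
    next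
      fix x y assume "(x = a \<and> y \<in> {y. E a y \<and> \<not> E b y} \<union> {y. E a y \<and> E b y}) \<or>
              (y = a \<and> x \<in> {y. E a y \<and> \<not> E b y} \<union> {y. E a y \<and> E b y}) \<or>
              (x = b \<and> y \<in> {y. E b y \<and> \<not> E a y} \<union> {y. E a y \<and> E b y}) \<or>
              (y = b \<and> x \<in> {y. E b y \<and> \<not> E a y} \<union> {y. E a y \<and> E b y}) \<or>
              (x \<in> {y. E a y \<and> \<not> E b y} \<and> y \<in> {y. E b y \<and> \<not> E a y}) \<or>
              (x \<in> {y. E b y \<and> \<not> E a y} \<and> y \<in> {y. E a y \<and> \<not> E b y})"
      then show "E x y" using PQ[of x y] PQ[of y x] f(4)[of a x] f(4)[of b x] f(4)[of y x] by blast
    qed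
    show "a \<noteq> b" by fact
    show "a \<notin> {y. E a y \<and> \<not> E b y} \<union> {y. E b y \<and> \<not> E a y} \<union> {y. E a y \<and> E b y}"
      using f(5)[of a] f(4)[of b a] nab by blast
    show "b \<notin> {y. E a y \<and> \<not> E b y} \<union> {y. E b y \<and> \<not> E a y} \<union> {y. E a y \<and> E b y}"
      using f(5)[of b] nab by blast
    show "{y. E a y \<and> \<not> E b y} \<inter> {y. E b y \<and> \<not> E a y} = {}" by blast
    show "{y. E a y \<and> \<not> E b y} \<inter> {y. E a y \<and> E b y} = {}" by blast
    show "{y. E b y \<and> \<not> E a y} \<inter> {y. E a y \<and> E b y} = {}" by blast
    show "{y. E a y \<and> \<not> E b y} \<noteq> {}" using Pn by blast
    show "{y. E b y \<and> \<not> E a y} \<noteq> {}" using Qn by blast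
    show "{y. E a y \<and> E b y} \<noteq> {}" using Ea by blast
  qed
qed

theorem theorem2:
  fixes V :: "'a set" and E :: "'a \<Rightarrow> 'a \<Rightarrow> bool"
  assumes "minimal_prime_graph_complement V E"
    and "\<exists>v\<in>V. degree V E v = 2"
  shows "\<exists>A B P Q R.
           V = {A, B} \<union> P \<union> Q \<union> R \<and> A \<noteq> B \<and>
           A \<notin> P \<union> Q \<union> R \<and> B \<notin> P \<union> Q \<union> R \<and>
           P \<inter> Q = {} \<and> P \<inter> R = {} \<and> Q \<inter> R = {} \<and>
           P \<noteq> {} \<and> Q \<noteq> {} \<and> R \<noteq> {} \<and>
           (\<forall>x y. E x y \<longleftrightarrow>
              (x = A \<and> y \<in> P \<union> R) \<or> (y = A \<and> x \<in> P \<union> R) \<or>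
              (x = B \<and> y \<in> Q \<union> R) \<or> (y = B \<and> x \<in> Q \<union> R) \<or>
              (x \<in> P \<and> y \<in> Q) \<or> (x \<in> Q \<and> y \<in> P))"
proof -
  obtain v where v: "v \<in> V" "card {u \<in> V. E v u} = 2"
    using assms(2) unfolding degree_def by blast
  then obtain a b where ab: "{u \<in> V. E v u} = {a, b}" "a \<noteq> b"
    by (auto simp: card_2_iff)
  have nbr: "\<forall>y. E v y \<longleftrightarrow> (y = a \<or> y = b)"
  proof
    fix y
    have "E v y \<longleftrightarrow> y \<in> {u \<in> V. E v u}" using mpgc_facts(3)[OF assms(1), of v y] by blast
    then show "E v y \<longleftrightarrow> (y = a \<or> y = b)" using ab(1) by simp
  qed
  show ?thesis by (rule core[OF assms(1) v(1) ab(2) nbr])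
qed

end
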